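(* Let $d\ge3$, $\lambda\in\mathbb{R}$, $x\in\mathbb{R}^N$, and $\mathcal{Y}=\lambda x^{\otimes d}+\frac1{\sqrt N}\mathcal{W}$ with $\mathcal{W}\in\mathcal{S}^d(N)$. Let $(\mu,u)$ be an eigenpair of $\mathcal{Y}$ with $\mu\neq0$ such that $\mu/(d-1)$ is not an eigenvalue of $\mathcal{Y}\cdot u^{d-2}$. Then, locally around $\mathcal{W}$, $(\mu,u)$ is a continuously differentiable function of the independent entries of $\mathcal{W}$, and for each index tuple $\boldsymbol i=(i_1,\dots,i_d)$, $$\frac{\partial\mu}{\partial W_{\boldsymbol i}}=\frac{1}{\sigma^2_{\boldsymbol i}\sqrt N}\prod_{j=1}^d u_{i_j},\qquad \frac{\partial u}{\partial W_{\boldsymbol i}}=-\frac{1}{(d-1)\sqrt N}\bar R\,\phi+\frac{1}{(d-2)\mu}\frac{\partial\mu}{\partial W_{\boldsymbol i}}\,u,$$ where $\bar R=\left(\mathcal{Y}\cdot u^{d-2}-\frac{\mu}{d-1}I\right)^{-1}$ and $\phi\in\mathbb{R}^N$ is given by $\sigma^2_{\boldsymbol i}\,\phi=\frac1d\sum_{j=1}^d\Big(\prod_{k\neq j}u_{i_k}\Big)e^{(i_j)}$, with $e^{(n)}$ the $n$-th canonical basis vector.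
   Context: $\mathcal{S}^d(N)$ is the space of real symmetric $d$-th order $N\times\cdots\times N$ tensors, parametrized by its independent entries $W_{\boldsymbol i}$ (one per multiset of indices); $\mathcal{Y}\cdot u^p$ is the $p$-fold contraction $(\mathcal{Y}\cdot u^p)_{i_{p+1}\dots i_d}=\sum_{i_1,\dots,i_p}Y_{i_1\dots i_d}u_{i_1}\cdots u_{i_p}$. An eigenpair $(\mu,u)$ of $\mathcal{Y}$ satisfies $\mathcal{Y}\cdot u^{d-1}=\mu u$, $\|u\|=1$. $\sigma^2_{\boldsymbol i}$ denotes the reciprocal of the number of distinct permutations of $(i_1,\dots,i_d)$ (the variance of $W_{\boldsymbol i}$ under the Gaussian orthogonal tensor ensemble, the law with density proportional to $e^{-\frac12\|\mathcal{W}\|_F^2}$). *)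

theory Defs
  imports "HOL-Analysis.Analysis" "HOL-Library.Multiset"
begin

text \<open>Index tuples (i_1,...,i_d) are lists over the finite index type 'n of length d.  The independent entries of a symmetric
  tensor are indexed by multisets of size d; we use an arbitrary finite type 'm together
  with a bijection enum : 'm -> {multisets of size d}, so that the parameter space
  (independent entries of W) is the Euclidean space real^'m.\<close>

definition idx :: "('m \<Rightarrow> 'n multiset) \<Rightarrow> 'n list \<Rightarrow> 'm" where
  "idx enum i = inv enum (mset i)"

definition W_entry :: "('m \<Rightarrow> 'n multiset) \<Rightarrow> real^'m \<Rightarrow> 'n list \<Rightarrow> real" where
  "W_entry enum w i = w $ idx enum i"

definition spiked_tensor ::
  "real \<Rightarrow> real^'n::finite \<Rightarrow> ('m \<Rightarrow> 'n multiset) \<Rightarrow> real^'m \<Rightarrow> 'n list \<Rightarrow> real" where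
  "spiked_tensor lam x enum w i =
     lam * (\<Prod>j\<leftarrow>i. x $ j) + W_entry enum w i / sqrt (real CARD('n))"

definition tcontr_vec :: "nat \<Rightarrow> ('n::finite list \<Rightarrow> real) \<Rightarrow> real^'n \<Rightarrow> real^'n" where
  "tcontr_vec d T u = (\<chi> a. \<Sum>is\<in>{is. length is = d - 1}. T (is @ [a]) * (\<Prod>j\<leftarrow>is. u $ j))"

definition tcontr_mat :: "nat \<Rightarrow> ('n::finite list \<Rightarrow> real) \<Rightarrow> real^'n \<Rightarrow> real^'n^'n" where
  "tcontr_mat d T u = (\<chi> a b. \<Sum>is\<in>{is. length is = d - 2}. T (is @ [a, b]) * (\<Prod>j\<leftarrow>is. u $ j))"

definition is_eigenpair :: "nat \<Rightarrow> ('n::finite list \<Rightarrow> real) \<Rightarrow> real \<Rightarrow> real^'n \<Rightarrow> bool" where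
  "is_eigenpair d T mu u \<longleftrightarrow> tcontr_vec d T u = mu *\<^sub>R u \<and> norm u = 1"

definition is_eigenvalue :: "real^'n^'n \<Rightarrow> real \<Rightarrow> bool" where
  "is_eigenvalue A c \<longleftrightarrow> (\<exists>v. v \<noteq> 0 \<and> A *v v = c *\<^sub>R v)"

definition sigma2 :: "'n list \<Rightarrow> real" where
  "sigma2 i = 1 / real (card {js. mset js = mset i})"

definition phi_vec :: "nat \<Rightarrow> real^'n::finite \<Rightarrow> 'n list \<Rightarrow> real^'n" where
  "phi_vec d u i = (1 / (real d * sigma2 i)) *\<^sub>R
     (\<Sum>j<d. (\<Prod>k\<in>{..<d} - {j}. u $ (i ! k)) *\<^sub>R axis (i ! j) 1)"

end

theory Submission
  imports Defs "HOL-Combinatorics.Multiset_Permutations"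
begin

definition symT :: "('n list \<Rightarrow> real) \<Rightarrow> bool" where
  "symT Y \<longleftrightarrow> (\<forall>xs ys. mset xs = mset ys \<longrightarrow> Y xs = Y ys)"

definition Fc :: "('n::finite list \<Rightarrow> real) \<Rightarrow> real^'n \<Rightarrow> nat \<Rightarrow> 'n list \<Rightarrow> real" where
  "Fc Y u n s = (\<Sum>is\<in>{is. length is = n}. Y (is @ s) * prod_list (map (($) u) is))"

fun dprod :: "real^'n \<Rightarrow> 'n list \<Rightarrow> real^'n \<Rightarrow> real" where
  "dprod u [] h = 0"
| "dprod u (j#is) h = h$j * prod_list (map (($) u) is) + u$j * dprod u is h"

definition Dc :: "('n::finite list \<Rightarrow> real) \<Rightarrow> real^'n \<Rightarrow> real^'n \<Rightarrow> nat \<Rightarrow> 'n list \<Rightarrow> real" where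
  "Dc Y u h n s = (\<Sum>is\<in>{is. length is = n}. Y (is @ s) * dprod u is h)"

lemma finite_len: "finite {is::'n::finite list. length is = n}"
  using finite_lists_length_eq[of "UNIV::'n set" n] by simp

lemma sum_lists_Suc:
  "(\<Sum>is\<in>{is::'n::finite list. length is = Suc n}. f is) = (\<Sum>j\<in>UNIV. \<Sum>is\<in>{is. length is = n}. f (j#is))"
proof -
  have e: "{is::'n list. length is = Suc n} = (\<lambda>(j,is). j#is) ` (UNIV \<times> {is. length is = n})"
    by (auto simp: length_Suc_conv image_iff)
  have i: "inj_on (\<lambda>(j,is). j#is) (UNIV \<times> {is::'n list. length is = n})"
    by (auto simp: inj_on_def)
  show ?thesis
    unfolding e sum.reindex[OF i] by (simp add: sum.cartesian_product split_def)
qed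

lemma Fcong: "symT Y \<Longrightarrow> mset s = mset s' \<Longrightarrow> Fc Y u n s = Fc Y u n s'"
  unfolding Fc_def symT_def by (intro sum.cong refl) (metis mset_append)

lemma Fstep: "symT Y \<Longrightarrow> Fc Y u (Suc n) s = (\<Sum>j\<in>UNIV. u$j * Fc Y u n (j#s))"
  unfolding Fc_def sum_lists_Suc
proof (intro sum.cong refl)
  fix j assume "symT Y"
  have "\<And>is. Y ((j#is) @ s) = Y (is @ (j#s))"
    using \<open>symT Y\<close> unfolding symT_def by (metis append_Cons mset_append mset.simps(2) union_mset_add_mset_left union_mset_add_mset_right)
  then show "(\<Sum>is\<in>{is. length is = n}. Y ((j # is) @ s) * prod_list (map (($) u) (j # is))) =
         u $ j * (\<Sum>is\<in>{is. length is = n}. Y (is @ j # s) * prod_list (map (($) u) is))"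
    by (simp add: sum_distrib_left algebra_simps)
qed

lemma Dstep: "symT Y \<Longrightarrow> Dc Y u h (Suc n) s = real (Suc n) * (\<Sum>b\<in>UNIV. h$b * Fc Y u n (b#s))"
proof (induction n arbitrary: s)
  case 0
  then show ?case unfolding Dc_def Fc_def sum_lists_Suc by (simp add: mult.commute)
next
  case (Suc n)
  have sy: "\<And>j is s. Y (j # (is @ s)) = Y (is @ (j#s))"
    using Suc.prems unfolding symT_def by (metis append_Cons mset_append mset.simps(2) union_mset_add_mset_left union_mset_add_mset_right)
  have sy2: "\<And>j is s. Y (j # (is @ s)) = Y (is @ (s @ [j]))"
    using Suc.prems unfolding symT_def by (simp add: union_commute)
  have "Dc Y u h (Suc (Suc n)) s = (\<Sum>j\<in>UNIV. h$j * Fc Y u (Suc n) (j#s) + u$j * Dc Y u h (Suc n) (s @ [j]))"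
    unfolding Dc_def[of _ _ _ "Suc (Suc n)"] sum_lists_Suc[of _ "Suc n"]
  proof (intro sum.cong refl)
    fix j
    show "(\<Sum>is\<in>{is. length is = Suc n}. Y ((j # is) @ s) * dprod u (j # is) h) =
          h $ j * Fc Y u (Suc n) (j # s) + u $ j * Dc Y u h (Suc n) (s @ [j])"
    proof -
      have "\<And>xs. Y ((j#xs)@s) * dprod u (j#xs) h = h$j * (Y(xs@j#s) * prod_list (map (($) u) xs)) + u$j * (Y(xs@s@[j]) * dprod u xs h)"
      proof -
        fix xs
        have a: "Y (j#xs@s) = Y(xs@j#s)" by (rule sy)
        have b: "Y(j#xs@s) = Y(xs@s@[j])" by (rule sy2)
        show "Y ((j#xs)@s) * dprod u (j#xs) h = h$j * (Y(xs@j#s) * prod_list (map (($) u) xs)) + u$j * (Y(xs@s@[j]) * dprod u xs h)"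
        proof -
          have "Y ((j#xs)@s) * dprod u (j#xs) h = h$j * (Y(j#xs@s) * prod_list (map (($) u) xs)) + u$j * (Y(j#xs@s) * dprod u xs h)"
            by (simp add: distrib_left distrib_right mult.commute mult.left_commute)
          also have "\<dots> = h$j * (Y(xs@j#s) * prod_list (map (($) u) xs)) + u$j * (Y(xs@s@[j]) * dprod u xs h)"
            using a b by metis
          finally show ?thesis .
        qed
      qed
      then show ?thesis unfolding Fc_def Dc_def
        by (simp only: sum.distrib sum_distrib_left)
    qed
  qed
  also have "\<dots> = (\<Sum>j\<in>UNIV. h$j * Fc Y u (Suc n) (j#s)) + real (Suc n) * (\<Sum>b\<in>UNIV. h$b * (\<Sum>j\<in>UNIV. u$j * Fc Y u n (b#s@[j])))"
  proof -
    have "(\<Sum>j\<in>UNIV. u$j * Dc Y u h (Suc n) (s @ [j])) = (\<Sum>j\<in>UNIV. \<Sum>b\<in>UNIV. real (Suc n) * (h$b * (u$j * Fc Y u n (b#s@[j]))))"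
      unfolding Suc.IH[OF Suc.prems] by (simp add: sum_distrib_left mult.left_commute)
    also have "\<dots> = (\<Sum>b\<in>UNIV. \<Sum>j\<in>UNIV. real (Suc n) * (h$b * (u$j * Fc Y u n (b#s@[j]))))"
      by (rule sum.swap)
    also have "\<dots> = real (Suc n) * (\<Sum>b\<in>UNIV. h$b * (\<Sum>j\<in>UNIV. u$j * Fc Y u n (b#s@[j])))"
      by (simp add: sum_distrib_left)
    finally show ?thesis by (simp add: sum.distrib)
  qed
  also have "(\<lambda>b. (\<Sum>j\<in>UNIV. u$j * Fc Y u n (b#s@[j]))) = (\<lambda>b. Fc Y u (Suc n) (b#s))"
  proof
    fix b
    have "\<And>j. Fc Y u n (b#s@[j]) = Fc Y u n (j#b#s)"
      by (rule Fcong[OF Suc.prems]) simp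
    then show "(\<Sum>j\<in>UNIV. u$j * Fc Y u n (b#s@[j])) = Fc Y u (Suc n) (b#s)"
      by (simp add: Fstep[OF Suc.prems])
  qed
  finally show ?case by (simp add: algebra_simps)
qed

definition C1 :: "('a::real_normed_vector \<Rightarrow> 'b::real_normed_vector) \<Rightarrow> ('a \<Rightarrow> 'a \<Rightarrow> 'b) \<Rightarrow> bool" where
  "C1 f f' \<longleftrightarrow> (\<forall>z. (f has_derivative f' z) (at z)) \<and> (\<forall>h. continuous_on UNIV (\<lambda>z. f' z h))"

lemma C1_cont: "C1 f f' \<Longrightarrow> continuous_on UNIV f"
  unfolding C1_def
  by (meson continuous_at_imp_continuous_on has_derivative_continuous)

lemma C1_cong: "C1 f f' \<Longrightarrow> (\<And>z. f z = g z) \<Longrightarrow> (\<And>z h. f' z h = g' z h) \<Longrightarrow> C1 g g'"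
proof -
  assume a: "C1 f f'" "\<And>z. f z = g z" "\<And>z h. f' z h = g' z h"
  have "f = g" "f' = g'" using a(2,3) by (auto intro!: ext)
  then show ?thesis using a(1) by simp
qed

lemma C1_const: "C1 (\<lambda>z. c) (\<lambda>z h. 0)"
  unfolding C1_def by auto

lemma C1_linear: "bounded_linear L \<Longrightarrow> C1 L (\<lambda>z. L)"
  unfolding C1_def by (auto intro: bounded_linear_imp_has_derivative)

lemma C1_add: "C1 f f' \<Longrightarrow> C1 g g' \<Longrightarrow> C1 (\<lambda>z. f z + g z) (\<lambda>z h. f' z h + g' z h)"
  unfolding C1_def by (auto intro!: derivative_eq_intros continuous_intros)

lemma C1_diff: "C1 f f' \<Longrightarrow> C1 g g' \<Longrightarrow> C1 (\<lambda>z. f z - g z) (\<lambda>z h. f' z h - g' z h)"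
  unfolding C1_def by (auto intro!: derivative_eq_intros continuous_intros)

lemma C1_scaleR:
  fixes f :: "'a::real_normed_vector \<Rightarrow> real" and g :: "'a \<Rightarrow> 'b::real_normed_vector"
  shows "C1 f f' \<Longrightarrow> C1 g g' \<Longrightarrow> C1 (\<lambda>z. f z *\<^sub>R g z) (\<lambda>z h. f z *\<^sub>R g' z h + f' z h *\<^sub>R g z)"
proof -
  assume a: "C1 f f'" "C1 g g'"
  have cf: "continuous_on UNIV f" and cg: "continuous_on UNIV g" using a C1_cont by auto
  show ?thesis
    using a cf cg unfolding C1_def
    by (auto intro!: derivative_eq_intros continuous_intros)
qed

lemma C1_mult:
  fixes f :: "'a::real_normed_vector \<Rightarrow> real"
  shows "C1 f f' \<Longrightarrow> C1 g g' \<Longrightarrow> C1 (\<lambda>z. f z * g z) (\<lambda>z h. f z * g' z h + f' z h * g z)"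
  using C1_scaleR[of f f' g g'] by simp

lemma C1_sum: "finite A \<Longrightarrow> (\<And>a. a \<in> A \<Longrightarrow> C1 (f a) (f' a)) \<Longrightarrow>
   C1 (\<lambda>z. \<Sum>a\<in>A. f a z) (\<lambda>z h. \<Sum>a\<in>A. f' a z h)"
  unfolding C1_def by (auto intro!: derivative_eq_intros continuous_intros)

lemma C1_pair: "C1 f f' \<Longrightarrow> C1 g g' \<Longrightarrow> C1 (\<lambda>z. (f z, g z)) (\<lambda>z h. (f' z h, g' z h))"
  unfolding C1_def by (auto intro!: derivative_eq_intros continuous_intros)

lemma vec_as_sum: "(\<chi> a. g a) = (\<Sum>a\<in>UNIV. g a *\<^sub>R (axis a 1 :: real^'n::finite))"
  by (simp add: vec_eq_iff axis_def sum_component if_distrib cong: if_cong)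

lemma C1_vec:
  fixes f :: "'n::finite \<Rightarrow> 'a::real_normed_vector \<Rightarrow> real"
  shows "(\<And>a. C1 (f a) (f' a)) \<Longrightarrow> C1 (\<lambda>z. \<chi> a::'n::finite. f a z) (\<lambda>z h. \<chi> a. f' a z h)"
proof -
  assume a: "\<And>a. C1 (f a) (f' a)"
  have "C1 (\<lambda>z. \<Sum>a\<in>UNIV. f a z *\<^sub>R (axis a 1 :: real^'n)) (\<lambda>z h. \<Sum>a\<in>UNIV. f a z *\<^sub>R 0 + f' a z h *\<^sub>R (axis a 1 :: real^'n))"
    by (intro C1_sum C1_scaleR a C1_const) simp
  then show ?thesis
    by (rule C1_cong) (simp_all add: vec_as_sum)
qed

definition Phi :: "real \<Rightarrow> real^'n::finite \<Rightarrow> ('m::finite \<Rightarrow> 'n multiset) \<Rightarrow> nat \<Rightarrow>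
   (real^'m) \<times> real \<times> (real^'n) \<Rightarrow> (real^'m) \<times> real \<times> (real^'n)" where
  "Phi lam x enum d z = (fst z, (snd (snd z) \<bullet> snd (snd z),
     tcontr_vec d (spiked_tensor lam x enum (fst z)) (snd (snd z)) - fst (snd z) *\<^sub>R snd (snd z)))"

definition Phi' :: "real \<Rightarrow> real^'n::finite \<Rightarrow> ('m::finite \<Rightarrow> 'n multiset) \<Rightarrow> nat \<Rightarrow>
   (real^'m) \<times> real \<times> (real^'n) \<Rightarrow> (real^'m) \<times> real \<times> (real^'n) \<Rightarrow> (real^'m) \<times> real \<times> (real^'n)" where
  "Phi' lam x enum d z h = (fst h, (2 * (snd (snd z) \<bullet> snd (snd h)),
     (\<chi> a. \<Sum>is\<in>{is. length is = d - 1}.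
        spiked_tensor lam x enum (fst z) (is @ [a]) * dprod (snd (snd z)) is (snd (snd h))
        + fst h $ idx enum (is @ [a]) / sqrt (real CARD('n)) * prod_list (map (($) (snd (snd z))) is))
     - (fst (snd z) *\<^sub>R snd (snd h) + fst (snd h) *\<^sub>R snd (snd z))))"

lemma aux2: "(\<Sum>a\<in>A. (x a::real) * y a + y a * x a) = 2 * (\<Sum>a\<in>A. x a * y a)"
proof -
  have "\<And>a. x a * y a + y a * x a = 2 * (x a * y a)" by simp
  then show ?thesis by (simp add: sum_distrib_left)
qed

lemma bl_u: "bounded_linear (\<lambda>z::(real^'m::finite) \<times> real \<times> (real^'n::finite). snd (snd z) $ j)"
  by (intro bounded_linear_compose[OF bounded_linear_vec_nth] bounded_linear_compose[OF bounded_linear_snd] bounded_linear_snd)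

lemma bl_w: "bounded_linear (\<lambda>z::(real^'m::finite) \<times> real \<times> (real^'n::finite). fst z $ k / c)"
  by (intro bounded_linear_compose[OF bounded_linear_divide] bounded_linear_compose[OF bounded_linear_vec_nth] bounded_linear_fst)

lemma C1_prodl: "C1 (\<lambda>z::(real^'m::finite) \<times> real \<times> (real^'n::finite). prod_list (map (($) (snd (snd z))) xs))
     (\<lambda>z h. dprod (snd (snd z)) xs (snd (snd h)))"
proof (induction xs)
  case Nil
  then show ?case using C1_const[of 1] by simp
next
  case (Cons j xs)
  show ?case
    by (rule C1_cong[OF C1_mult[OF C1_linear[OF bl_u[of j]] Cons.IH]]) (simp_all add: algebra_simps)
qed

lemma C1_Phi: "C1 (Phi lam x enum d :: (real^'m::finite) \<times> real \<times> (real^'n::finite) \<Rightarrow> _) (Phi' lam x enum d)"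
proof -
  let ?N = "sqrt (real CARD('n))"
  have c1: "C1 (\<lambda>z::(real^'m) \<times> real \<times> (real^'n). fst z) (\<lambda>z h. fst h)"
    by (rule C1_linear[OF bounded_linear_fst])
  have c2: "C1 (\<lambda>z::(real^'m) \<times> real \<times> (real^'n). snd (snd z) \<bullet> snd (snd z)) (\<lambda>z h. 2 * (snd (snd z) \<bullet> snd (snd h)))"
  proof -
    have "C1 (\<lambda>z::(real^'m) \<times> real \<times> (real^'n). \<Sum>a\<in>UNIV. snd(snd z)$a * snd(snd z)$a)
       (\<lambda>z h. \<Sum>a\<in>UNIV. snd(snd z)$a * snd(snd h)$a + snd(snd h)$a * snd(snd z)$a)"
      by (rule C1_sum, simp, rule C1_mult[OF C1_linear[OF bl_u] C1_linear[OF bl_u]])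
    then show ?thesis by (rule C1_cong) (simp_all only: inner_vec_def inner_real_def aux2)
  qed
  have coef: "C1 (\<lambda>z::(real^'m) \<times> real \<times> (real^'n). spiked_tensor lam x enum (fst z) xs)
               (\<lambda>z h. fst h $ idx enum xs / ?N)" for xs
    by (rule C1_cong[OF C1_add[OF C1_const C1_linear[OF bl_w]]])
       (simp_all add: spiked_tensor_def W_entry_def)
  have c3: "C1 (\<lambda>z::(real^'m) \<times> real \<times> (real^'n). tcontr_vec d (spiked_tensor lam x enum (fst z)) (snd (snd z)))
     (\<lambda>z h. \<chi> a. \<Sum>is\<in>{is. length is = d - 1}.
        spiked_tensor lam x enum (fst z) (is @ [a]) * dprod (snd (snd z)) is (snd (snd h))
        + fst h $ idx enum (is @ [a]) / ?N * prod_list (map (($) (snd (snd z))) is))"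
    unfolding tcontr_vec_def
    by (rule C1_vec, rule C1_sum[OF finite_len], rule C1_mult[OF coef C1_prodl])
  have c4: "C1 (\<lambda>z::(real^'m) \<times> real \<times> (real^'n). fst (snd z) *\<^sub>R snd (snd z))
     (\<lambda>z h. fst (snd z) *\<^sub>R snd (snd h) + fst (snd h) *\<^sub>R snd (snd z))"
    by (rule C1_scaleR[OF C1_linear C1_linear])
      (intro bounded_linear_compose[OF bounded_linear_fst] bounded_linear_snd,
       intro bounded_linear_compose[OF bounded_linear_snd] bounded_linear_snd)
  show ?thesis
    unfolding Phi_def[abs_def] Phi'_def[abs_def]
    by (rule C1_pair[OF c1 C1_pair[OF c2 C1_diff[OF c3 c4]]])
qed

lemma sym_spiked: "symT (spiked_tensor lam x enum w)"
  unfolding symT_def spiked_tensor_def W_entry_def idx_def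
  by (metis mset_map prod_mset_prod_list)

lemma sym_E: "symT (\<lambda>js. hw $ idx enum js / c)"
  unfolding symT_def idx_def by simp

lemma tv_Fc: "tcontr_vec d Y u = (\<chi> a. Fc Y u (d-1) [a])"
  unfolding tcontr_vec_def Fc_def by simp

lemma tm_Fc: "tcontr_mat d Y u = (\<chi> a b. Fc Y u (d-2) [a,b])"
  unfolding tcontr_mat_def Fc_def by simp

lemma tm_sym: "symT Y \<Longrightarrow> tcontr_mat d Y u $ a $ b = tcontr_mat d Y u $ b $ a"
  unfolding tm_Fc by (simp, rule Fcong) auto

lemma Fc_sw: "symT Y \<Longrightarrow> Fc Y u n [b,a] = Fc Y u n [a,b]"
  by (rule Fcong) auto

lemma tm_u: "symT Y \<Longrightarrow> d \<ge> 3 \<Longrightarrow> tcontr_mat d Y u *v u = tcontr_vec d Y u"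
proof -
  assume s: "symT Y" and d: "d \<ge> 3"
  have e: "d - 1 = Suc (d - 2)" using d by simp
  have "(\<Sum>b\<in>UNIV. Fc Y u (d-2) [a,b] * u$b) = Fc Y u (Suc (d-2)) [a]" for a
    unfolding Fstep[OF s] by (intro sum.cong refl) (simp add: Fc_sw[OF s, of _ _ _ a] mult.commute)
  then show ?thesis
    unfolding tm_Fc tv_Fc e by (simp add: vec_eq_iff matrix_vector_mult_def)
qed

lemma inner_sym_mat:
  fixes M :: "real^'n::finite^'n"
  assumes "\<And>a b. M $ a $ b = M $ b $ a"
  shows "u \<bullet> (M *v v) = (M *v u) \<bullet> v"
proof -
  have "u \<bullet> (M *v v) = (\<Sum>a\<in>UNIV. \<Sum>b\<in>UNIV. u$a * M$a$b * v$b)"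
    by (simp add: inner_vec_def matrix_vector_mult_def sum_distrib_left mult.assoc)
  also have "\<dots> = (\<Sum>b\<in>UNIV. \<Sum>a\<in>UNIV. u$a * M$a$b * v$b)" by (rule sum.swap)
  also have "\<dots> = (\<Sum>b\<in>UNIV. v$b * (\<Sum>a\<in>UNIV. M$b$a * u$a))"
    by (simp add: sum_distrib_left assms[of _ b for b] mult.commute mult.left_commute)
  also have "\<dots> = (M *v u) \<bullet> v"
    by (simp add: inner_vec_def matrix_vector_mult_def mult.commute)
  finally show ?thesis .
qed

definition gw :: "('m \<Rightarrow> 'n multiset) \<Rightarrow> real^'m \<Rightarrow> real^'n::finite \<Rightarrow> nat \<Rightarrow> real^'n" where
  "gw enum hw u d = (\<chi> a. Fc (\<lambda>js. hw $ idx enum js / sqrt (real CARD('n))) u (d-1) [a])"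

lemma Phi'_eq:
  fixes u :: "real^'n::finite" and w :: "real^'m::finite"
  assumes d: "d \<ge> 3"
  shows "Phi' lam x enum d (w,(mu,u)) (hw,(hmu,hu)) = (hw, (2*(u \<bullet> hu),
     real (d-1) *\<^sub>R (tcontr_mat d (spiked_tensor lam x enum w) u *v hu) + gw enum hw u d - (mu *\<^sub>R hu + hmu *\<^sub>R u)))"
proof -
  let ?Y = "spiked_tensor lam x enum w"
  have e: "d - 1 = Suc (d - 2)" using d by simp
  have "(\<chi> a. \<Sum>is\<in>{is. length is = d - 1}.
        ?Y (is @ [a]) * dprod u is hu
        + hw $ idx enum (is @ [a]) / sqrt (real CARD('n)) * prod_list (map (($) u) is))
     = (\<chi> a. Dc ?Y u hu (d-1) [a]) + gw enum hw u d"
    unfolding gw_def Dc_def Fc_def by (simp add: vec_eq_iff sum.distrib)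
  also have "(\<chi> a. Dc ?Y u hu (d-1) [a]) = real (d-1) *\<^sub>R (tcontr_mat d ?Y u *v hu)"
  proof -
    have "(\<Sum>b\<in>UNIV. hu$b * Fc ?Y u (d-2) [b,a]) = (\<Sum>b\<in>UNIV. Fc ?Y u (d-2) [a,b] * hu$b)" for a
      by (intro sum.cong refl) (simp add: Fc_sw[OF sym_spiked, of _ _ _ _ _ _ a] mult.commute)
    then show ?thesis
      unfolding e Dstep[OF sym_spiked] tm_Fc by (simp add: vec_eq_iff matrix_vector_mult_def)
  qed
  finally show ?thesis unfolding Phi'_def by simp
qed

lemma P_mset: "prod_list (map (($) u) xs) = prod_mset (image_mset (($) u) (mset xs))"
  by (metis mset_map prod_mset_prod_list)

lemma idx_eq:
  assumes b: "bij_betw enum UNIV {M. size M = d}" and l1: "length js = d" and l2: "length i = d"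
  shows "(idx enum js = idx enum i) = (mset js = mset i)"
proof
  assume "idx enum js = idx enum i"
  then have e: "inv_into UNIV enum (mset js) = inv_into UNIV enum (mset i)" unfolding idx_def by simp
  have r: "enum ` UNIV = {M. size M = d}" by (rule bij_betw_imp_surj_on[OF b])
  have a1: "mset js \<in> enum ` UNIV" unfolding r using l1 by simp
  have a2: "mset i \<in> enum ` UNIV" unfolding r using l2 by simp
  show "mset js = mset i" by (rule inv_into_injective[OF e a1 a2])
qed (simp add: idx_def)

lemma prod_minus_j:
  assumes "j < length i"
  shows "(\<Prod>k\<in>{..<length i} - {j}. u $ (i!k)) = prod_mset (image_mset (($) u) (mset i - {#i!j#}))"
proof -
  have m1: "mset_set ({..<length i} - {j}) = mset_set {..<length i} - {#j#}"
    using assms by (subst mset_set_Diff) auto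
  have m2: "image_mset (\<lambda>k. u $ (i!k)) (mset_set {..<length i} - {#j#}) = image_mset (\<lambda>k. u $ (i!k)) (mset_set {..<length i}) - {#u $ (i!j)#}"
    using assms by (subst image_mset_Diff) auto
  have m3: "image_mset (\<lambda>k. u $ (i!k)) (mset_set {..<length i}) = image_mset (($) u) (mset i)"
  proof -
    have "image_mset (\<lambda>k. u $ (i!k)) (mset_set {..<length i}) = mset (map (($) u) (map (nth i) [0..<length i]))"
      by (simp add: mset_set_upto_eq_mset_upto multiset.map_comp o_def)
    also have "\<dots> = image_mset (($) u) (mset i)" by (simp add: map_nth)
    finally show ?thesis .
  qed
  have m4: "image_mset (($) u) (mset i) - {#u $ (i!j)#} = image_mset (($) u) (mset i - {#i!j#})"
  proof -
    have "{#i!j#} \<subseteq># mset i" using assms by (simp add: nth_mem)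
    from image_mset_Diff[OF this, of "($) u"] show ?thesis by simp
  qed
  have "(\<Prod>k\<in>{..<length i} - {j}. u $ (i!k)) = prod_mset (image_mset (\<lambda>k. u $ (i!k)) (mset_set ({..<length i} - {j})))"
    by (rule prod_unfold_prod_mset)
  then show ?thesis by (simp only: m1 m2 m3 m4)
qed

lemma G1:
  fixes u :: "real^'n::finite" and enum :: "'m::finite \<Rightarrow> 'n multiset"
  assumes b: "bij_betw enum UNIV {M. size M = d}" and li: "length i = d"
  shows "Fc (\<lambda>js. axis (idx enum i) 1 $ idx enum js / sqrt (real CARD('n))) u d []
     = real (card {js. mset js = mset i}) * prod_list (map (($) u) i) / sqrt (real CARD('n))"
proof -
  let ?N = "sqrt (real CARD('n))"
  have "Fc (\<lambda>js. axis (idx enum i) 1 $ idx enum js / ?N) u d []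
      = (\<Sum>js\<in>{js. length js = d}. if mset js = mset i then prod_list (map (($) u) i) / ?N else 0)"
    unfolding Fc_def append_Nil2
  proof (intro sum.cong refl)
    fix js assume "js \<in> {js::'n list. length js = d}"
    then have l: "length js = d" by simp
    show "axis (idx enum i) 1 $ idx enum js / ?N * prod_list (map (($) u) js) =
        (if mset js = mset i then prod_list (map (($) u) i) / ?N else 0)"
      using idx_eq[OF b l li] by (auto simp: axis_def P_mset)
  qed
  also have "\<dots> = (\<Sum>js\<in>{js. length js = d \<and> mset js = mset i}. prod_list (map (($) u) i) / ?N)"
    by (subst sum.inter_filter[symmetric]) (auto simp: finite_len)
  also have "{js. length js = d \<and> mset js = mset i} = {js. mset js = mset i}"
    using li by (auto dest: mset_eq_length)
  finally show ?thesis by simp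
qed

lemma G2:
  fixes u :: "real^'n::finite" and enum :: "'m::finite \<Rightarrow> 'n multiset"
  assumes b: "bij_betw enum UNIV {M. size M = d}" and li: "length i = d" and d: "d \<ge> 1"
  shows "Fc (\<lambda>js. axis (idx enum i) 1 $ idx enum js / sqrt (real CARD('n))) u (d-1) [a]
     = phi_vec d u i $ a / sqrt (real CARD('n))"
proof -
  let ?N = "sqrt (real CARD('n))"
  let ?M = "mset i"
  let ?Q = "prod_mset (image_mset (($) u) (?M - {#a#}))"
  have "Fc (\<lambda>js. axis (idx enum i) 1 $ idx enum js / ?N) u (d-1) [a]
      = (\<Sum>js\<in>{js. length js = d-1}. if mset js + {#a#} = ?M then ?Q / ?N else 0)"
    unfolding Fc_def
  proof (intro sum.cong refl)
    fix js assume "js \<in> {js::'n list. length js = d - 1}"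
    then have l: "length (js @ [a]) = d" using d by simp
    have q: "mset js + {#a#} = ?M \<Longrightarrow> prod_list (map (($) u) js) = ?Q"
      unfolding P_mset by (metis add_diff_cancel_right')
    show "axis (idx enum i) 1 $ idx enum (js @ [a]) / ?N * prod_list (map (($) u) js) =
        (if mset js + {#a#} = ?M then ?Q / ?N else 0)"
      using idx_eq[OF b l li] q by (auto simp: axis_def)
  qed
  also have "\<dots> = (\<Sum>js\<in>{js. length js = d-1 \<and> mset js + {#a#} = ?M}. ?Q / ?N)"
    by (subst sum.inter_filter[symmetric]) (auto simp: finite_len)
  finally have L: "Fc (\<lambda>js. axis (idx enum i) 1 $ idx enum js / ?N) u (d-1) [a]
      = real (card {js. length js = d-1 \<and> mset js + {#a#} = ?M}) * ?Q / ?N" by simp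
  have phi: "phi_vec d u i $ a = (1 / (real d * sigma2 i)) * (\<Sum>j\<in>{j. j < d \<and> a = i!j}. ?Q)"
  proof -
    have "phi_vec d u i $ a = (1 / (real d * sigma2 i)) * (\<Sum>j<d. if a = i!j then (\<Prod>k\<in>{..<d} - {j}. u $ (i ! k)) else 0)"
      unfolding phi_vec_def by (simp add: sum_component axis_def if_distrib cong: if_cong)
    also have "(\<Sum>j<d. if a = i!j then (\<Prod>k\<in>{..<d} - {j}. u $ (i ! k)) else 0) = (\<Sum>j<d. if a = i!j then ?Q else 0)"
    proof (intro sum.cong refl)
      fix j assume "j \<in> {..<d}"
      then show "(if a = i!j then (\<Prod>k\<in>{..<d} - {j}. u $ (i ! k)) else 0) = (if a = i!j then ?Q else 0)"
        using prod_minus_j[of j i u] li by auto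
    qed
    also have "\<dots> = (\<Sum>j\<in>{j. j < d \<and> a = i!j}. ?Q)"
      by (subst sum.inter_filter[symmetric]) (auto simp: lessThan_def conj_commute)
    finally show ?thesis .
  qed
  have cnt: "card {j. j < d \<and> a = i!j} = count ?M a"
    using li by (simp add: count_mset count_list_eq_length_filter length_filter_conv_card eq_commute)
  have s2: "1 / sigma2 i = real (card (permutations_of_multiset ?M))"
    unfolding sigma2_def permutations_of_multiset_def by simp
  show ?thesis
  proof (cases "a \<in># ?M")
    case True
    have e: "{js. length js = d-1 \<and> mset js + {#a#} = ?M} = permutations_of_multiset (?M - {#a#})"
      unfolding permutations_of_multiset_def
    proof safe
      fix js assume "mset js + {#a#} = ?M" then show "mset js = ?M - {#a#}" by (metis add_diff_cancel_right')
    next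
      fix js assume "mset js = ?M - {#a#}"
      then show "mset js + {#a#} = ?M" using True by simp
      then have "size (mset js + {#a#}) = d" using li by simp
      then show "length js = d - 1" by simp
    qed
    have key: "card (permutations_of_multiset ?M) * count ?M a = d * card (permutations_of_multiset (?M - {#a#}))"
      using card_permutations_of_multiset_remove_aux[OF True] li by simp
    have sc: "(\<Sum>j\<in>{j. j < d \<and> a = i!j}. ?Q) = real (count ?M a) * ?Q"
      by (simp only: sum_constant cnt)
    have cp: "card (permutations_of_multiset ?M) > 0"
      by (simp add: card_gt_0_iff)
    have s3: "sigma2 i = 1 / real (card (permutations_of_multiset ?M))"
      unfolding sigma2_def permutations_of_multiset_def by simp
    have "phi_vec d u i $ a = real (card (permutations_of_multiset ?M)) * real (count ?M a) * ?Q / real d"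
      unfolding phi sc s3 using cp by simp
    also have "\<dots> = real (card (permutations_of_multiset (?M - {#a#}))) * ?Q"
      using d key by (simp add: field_simps flip: of_nat_mult)
    finally show ?thesis unfolding L e by simp
  next
    case False
    have e: "{js. length js = d-1 \<and> mset js + {#a#} = ?M} = {}"
    proof -
      have "add_mset a (mset x) = ?M \<Longrightarrow> False" for x
      proof -
        assume h: "add_mset a (mset x) = ?M"
        have "a \<in># add_mset a (mset x)" by simp
        then show False using h False by simp
      qed
      then show ?thesis by auto
    qed
    have z: "{j. j < d \<and> a = i!j} = {}" using False li by (auto simp: in_set_conv_nth)
    show ?thesis unfolding L e phi z by simp
  qed
qed

lemma inv_cont:
  fixes A :: "'b::metric_space \<Rightarrow> ('a::euclidean_space \<Rightarrow>\<^sub>L 'a)"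
  assumes cA: "continuous_on S A" and bij: "\<And>s. s \<in> S \<Longrightarrow> bij (blinfun_apply (A s))"
  shows "continuous_on S (\<lambda>s. inv (blinfun_apply (A s)) h)"
  unfolding continuous_on_def
proof
  fix s0 assume s0: "s0 \<in> S"
  define D where "D s = inv (blinfun_apply (A s)) h" for s
  define B where "B = inv (blinfun_apply (A s0))"
  have bB: "bounded_linear B"
    unfolding B_def using bij[OF s0]
    by (intro inj_linear_imp_inv_bounded_linear) (auto simp: bij_def blinfun.bounded_linear_right)
  obtain C where C: "C > 0" "\<And>y. norm (B y) \<le> norm y * C"
    using bounded_linear.pos_bounded[OF bB] by blast
  have AD: "A s (D s) = h" if "s \<in> S" for s
    unfolding D_def using bij[OF that] by (simp add: bij_def surj_f_inv_f)
  have BA: "B (A s0 y) = y" for y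
    unfolding B_def using bij[OF s0] by (simp add: bij_def inv_f_f)
  have est: "norm (D s - D s0) \<le> C * norm (A s - A s0) * norm (D s)" if "s \<in> S" for s
  proof -
    have "D s - D s0 = B (A s0 (D s - D s0))" by (rule BA[symmetric])
    also have "A s0 (D s - D s0) = (A s0 - A s) (D s)"
      using AD[OF that] AD[OF s0] by (simp add: blinfun.diff_right blinfun.diff_left)
    finally have "norm (D s - D s0) \<le> norm ((A s0 - A s) (D s)) * C" using C(2) by simp
    also have "\<dots> \<le> norm (A s0 - A s) * norm (D s) * C"
      using C(1) norm_blinfun by (intro mult_right_mono) auto
    finally show ?thesis by (simp add: norm_minus_commute algebra_simps)
  qed
  have "(A \<longlongrightarrow> A s0) (at s0 within S)"
    using cA s0 unfolding continuous_on_def by blast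
  then have nA: "((\<lambda>s. norm (A s - A s0)) \<longlongrightarrow> 0) (at s0 within S)"
    using tendsto_norm_zero LIM_zero by blast
  have ev: "eventually (\<lambda>s. norm (A s - A s0) < 1 / (2 * C)) (at s0 within S)"
    using order_tendstoD(2)[OF nA] C(1) by simp
  have "eventually (\<lambda>s. norm (D s - D s0) \<le> 2 * C * norm (D s0) * norm (A s - A s0)) (at s0 within S)"
  proof -
    have "eventually (\<lambda>s. s \<in> S) (at s0 within S)" by (simp add: eventually_at_filter)
    then show ?thesis using ev
    proof eventually_elim
      case (elim s)
      let ?x = "norm (D s - D s0)" and ?t = "C * norm (A s - A s0)"
      have t: "?t \<le> 1/2" using elim(2) C(1) by (simp add: field_simps)
      have t0: "?t \<ge> 0" using C(1) by simp
      have "?x \<le> ?t * norm (D s)" using est[OF elim(1)] by (simp add: mult.assoc)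
      also have "norm (D s) \<le> norm (D s0) + ?x"
        by (metis add.commute diff_add_cancel norm_triangle_ineq)
      then have "?t * norm (D s) \<le> ?t * (norm (D s0) + ?x)" using t0 by (simp add: mult_left_mono)
      finally have "?x \<le> ?t * norm (D s0) + ?t * ?x" by (simp add: algebra_simps)
      moreover have "?t * ?x \<le> (1/2) * ?x" by (rule mult_right_mono[OF t]) simp

      ultimately have "?x \<le> 2 * (?t * norm (D s0))" by linarith
      then show ?case by (simp add: algebra_simps)
    qed
  qed
  moreover have "((\<lambda>s. 2 * C * norm (D s0) * norm (A s - A s0)) \<longlongrightarrow> 0) (at s0 within S)"
    using tendsto_mult_right_zero[OF nA] by simp
  ultimately have "((\<lambda>s. D s - D s0) \<longlongrightarrow> 0) (at s0 within S)"
    by (rule Lim_null_comparison)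
  then show "((\<lambda>s. inv (blinfun_apply (A s)) h) \<longlongrightarrow> inv (blinfun_apply (A s0)) h) (at s0 within S)"
    unfolding D_def LIM_zero_iff .
qed

theorem mainTheorem7:
  fixes d :: nat and lam :: real and x :: "real^'n::finite"
    and enum :: "'m::finite \<Rightarrow> 'n multiset" and w0 :: "real^'m"
    and mu :: real and u :: "real^'n"
  assumes "d \<ge> 3"
    and "bij_betw enum UNIV {M. size M = d}"
    and "is_eigenpair d (spiked_tensor lam x enum w0) mu u"
    and "mu \<noteq> 0"
    and "\<not> is_eigenvalue (tcontr_mat d (spiked_tensor lam x enum w0) u) (mu / (real d - 1))"
  shows "\<exists>S muf uf. open S \<and> w0 \<in> S \<and> muf w0 = mu \<and> uf w0 = u
    \<and> (\<forall>w\<in>S. is_eigenpair d (spiked_tensor lam x enum w) (muf w) (uf w))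
    \<and> (\<forall>w\<in>S. muf differentiable (at w) \<and> uf differentiable (at w))
    \<and> (\<forall>k. continuous_on S (\<lambda>w. frechet_derivative muf (at w) (axis k 1))
          \<and> continuous_on S (\<lambda>w. frechet_derivative uf (at w) (axis k 1)))
    \<and> (\<forall>i. length i = d \<longrightarrow>
         (let Rbar = matrix_inv (tcontr_mat d (spiked_tensor lam x enum w0) u
                                  - (mu / (real d - 1)) *\<^sub>R mat 1);
              dmu = frechet_derivative muf (at w0) (axis (idx enum i) 1)
          in dmu = 1 / (sigma2 i * sqrt (real CARD('n))) * (\<Prod>j\<leftarrow>i. u $ j)
           \<and> frechet_derivative uf (at w0) (axis (idx enum i) 1)
               = - (1 / ((real d - 1) * sqrt (real CARD('n)))) *\<^sub>R (Rbar *v phi_vec d u i)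
                 + (dmu / ((real d - 2) * mu)) *\<^sub>R u))"
proof -
  have d3: "d \<ge> 3" using assms(1) .
  note b = assms(2)
  define Y0 where "Y0 = spiked_tensor lam x enum w0"
  define M where "M = tcontr_mat d Y0 u"
  define c where "c = mu / (real d - 1)"
  define N where "N = sqrt (real CARD('n))"
  define z0 :: "(real^'m) \<times> real \<times> (real^'n)" where "z0 = (w0, (mu, u))"
  define \<Phi> :: "(real^'m) \<times> real \<times> (real^'n) \<Rightarrow> _" where "\<Phi> = Phi lam x enum d"
  define \<Phi>' :: "(real^'m) \<times> real \<times> (real^'n) \<Rightarrow> _" where "\<Phi>' = Phi' lam x enum d"
  have eig: "tcontr_vec d Y0 u = mu *\<^sub>R u" and nu: "norm u = 1"
    using assms(3) unfolding is_eigenpair_def Y0_def by auto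
  have uu: "u \<bullet> u = 1" using nu by (simp add: norm_eq_1)
  have Phiz0: "\<Phi> z0 = (w0, (1, 0))" unfolding \<Phi>_def Phi_def z0_def using eig uu Y0_def by simp
  have C1: "C1 \<Phi> \<Phi>'" unfolding \<Phi>_def \<Phi>'_def by (rule C1_Phi)
  have der: "(\<Phi> has_derivative \<Phi>' z) (at z)" for z using C1 unfolding C1_def by blast
  have bl: "bounded_linear (\<Phi>' z)" for z using der has_derivative_bounded_linear by blast
  define f' where "f' z = Blinfun (\<Phi>' z)" for z
  have f'a: "blinfun_apply (f' z) = \<Phi>' z" for z unfolding f'_def using bl bounded_linear_Blinfun_apply by blast
  have cf': "continuous_on UNIV f'"
  proof (rule continuous_on_blinfun_componentwise)
    fix h :: "(real^'m) \<times> real \<times> (real^'n)"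
    have "continuous_on UNIV (\<lambda>z. \<Phi>' z h)" using C1 unfolding C1_def by blast
    then show "continuous_on UNIV (\<lambda>z. blinfun_apply (f' z) h)" by (simp add: f'a)
  qed
  have Mu: "M *v u = mu *\<^sub>R u" using tm_u[OF sym_spiked[of lam x enum w0] d3, of u] eig unfolding M_def Y0_def by simp
  have Msym: "M $ a $ b = M $ b $ a" for a b unfolding M_def Y0_def by (rule tm_sym[OF sym_spiked])
  have Phi'z0: "\<Phi>' z0 (hw,(hm,hu)) = (hw, (2*(u \<bullet> hu), real (d-1) *\<^sub>R (M *v hu) + gw enum hw u d - (mu *\<^sub>R hu + hm *\<^sub>R u)))"
    for hw hm hu
    unfolding \<Phi>'_def z0_def M_def Y0_def by (rule Phi'_eq[OF d3])
  have d1: "real (d-1) = real d - 1" using d3 by simp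
  have Amul: "(M - c *\<^sub>R mat 1) *v v = M *v v - c *\<^sub>R v" for v
    by (simp add: matrix_vector_mult_diff_rdistrib flip: scaleR_matrix_vector_assoc)
  have Ainj: "v = 0" if "(M - c *\<^sub>R mat 1) *v v = 0" for v
  proof (rule ccontr)
    assume "v \<noteq> 0"
    moreover have "M *v v = c *\<^sub>R v" using that Amul by simp
    ultimately show False using assms(5) unfolding is_eigenvalue_def M_def Y0_def c_def by blast
  qed
  have uMv: "u \<bullet> (M *v v) = mu * (u \<bullet> v)" for v
    using inner_sym_mat[OF Msym, of u v] Mu by simp
  have inj0: "h = 0" if "\<Phi>' z0 h = 0" for h
  proof -
    obtain hw hm hu where h: "h = (hw,(hm,hu))" by (metis prod.collapse)
    have gw0: "gw enum 0 u d = 0" by (simp add: gw_def Fc_def vec_eq_iff)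
    from that have hw: "hw = 0" and o: "u \<bullet> hu = 0"
      unfolding h Phi'z0 by (simp_all add: zero_prod_def)
    have e': "real (d-1) *\<^sub>R (M *v hu) - (mu *\<^sub>R hu + hm *\<^sub>R u) = 0"
      using that gw0 unfolding h Phi'z0 by (auto simp: zero_prod_def)
    then have "u \<bullet> (real (d-1) *\<^sub>R (M *v hu) - (mu *\<^sub>R hu + hm *\<^sub>R u)) = 0" by simp
    then have "hm = 0" using o uu uMv[of hu] by (simp add: inner_diff_right inner_add_right)
    then have r: "real (d-1) *\<^sub>R (M *v hu) = mu *\<^sub>R hu" using e' by simp
    have "(1/real (d-1)) *\<^sub>R (real (d-1) *\<^sub>R (M *v hu)) = (1/real (d-1)) *\<^sub>R (mu *\<^sub>R hu)"
      by (simp only: r)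
    then have "M *v hu = c *\<^sub>R hu" using d3 unfolding c_def d1[symmetric] by simp
    then have "hu = 0" using Ainj Amul by simp
    then show ?thesis using h hw \<open>hm = 0\<close> by (simp add: zero_prod_def)
  qed
  have lin0: "linear (\<Phi>' z0)" using bl bounded_linear.linear by blast
  have injP: "inj (\<Phi>' z0)"
    unfolding inj_on_def
  proof (intro ballI impI)
    fix a b assume "\<Phi>' z0 a = \<Phi>' z0 b"
    then have "\<Phi>' z0 (a - b) = 0" using linear_diff[OF lin0] by simp
    then show "a = b" using inj0[of "a - b"] by simp
  qed
  obtain g where lg: "linear g" and gP: "g \<circ> \<Phi>' z0 = id"
    using linear_injective_left_inverse[OF lin0 injP] by blast
  have blg: "bounded_linear g" using lg linear_conv_bounded_linear by blast
  define invf where "invf = Blinfun g"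
  have invf: "invf o\<^sub>L f' z0 = id_blinfun"
    by (rule blinfun_eqI) (simp add: invf_def bounded_linear_Blinfun_apply[OF blg] f'a pointfree_idE[OF gP])
  have der': "(\<Phi> has_derivative blinfun_apply (f' z)) (at z)" if "z \<in> UNIV" for z
    using der f'a by simp
  obtain U' V gi g' where "open U'" "U' \<subseteq> UNIV" "z0 \<in> U'" and oV: "open V" and z0V: "\<Phi> z0 \<in> V"
    and hom: "homeomorphism U' V \<Phi> gi"
    and derg: "\<And>y. y \<in> V \<Longrightarrow> (gi has_derivative (g' y)) (at y)"
    and g'eq: "\<And>y. y \<in> V \<Longrightarrow> g' y = inv (blinfun_apply (f'(gi y)))"
    and bijf: "\<And>y. y \<in> V \<Longrightarrow> bij (blinfun_apply (f'(gi y)))"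
    using inverse_function_theorem[OF open_UNIV der' cf' UNIV_I invf] by blast
  have giP: "\<Phi> (gi y) = y" if "y \<in> V" for y using hom that unfolding homeomorphism_def by blast
  have gi0: "gi (\<Phi> z0) = z0" using hom \<open>z0 \<in> U'\<close> unfolding homeomorphism_def by blast
  have cgi: "continuous_on V gi" using hom unfolding homeomorphism_def by blast
  define emb :: "real^'m \<Rightarrow> (real^'m) \<times> real \<times> (real^'n)" where "emb w = (w, (1, 0))" for w
  define S where "S = emb -` V"
  define muf where "muf w = fst (snd (gi (emb w)))" for w
  define uf where "uf w = snd (snd (gi (emb w)))" for w
  have emb0: "emb w0 = \<Phi> z0" unfolding emb_def Phiz0 ..
  have cemb: "continuous_on UNIV emb" unfolding emb_def by (intro continuous_intros)
  have oS: "open S" unfolding S_def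
    by (rule continuous_open_vimage[OF oV]) (use cemb in \<open>simp add: continuous_on_eq_continuous_at\<close>)
  have w0S: "w0 \<in> S" unfolding S_def using emb0 z0V by simp
  have embS: "emb w \<in> V" if "w \<in> S" for w using that unfolding S_def by simp
  have gi_w0: "gi (emb w0) = z0" using emb0 gi0 by simp
  have muf0: "muf w0 = mu" and uf0: "uf w0 = u" unfolding muf_def uf_def gi_w0 z0_def by simp_all
  have eigS: "is_eigenpair d (spiked_tensor lam x enum w) (muf w) (uf w)" if "w \<in> S" for w
  proof -
    obtain a m v where gv: "gi (emb w) = (a, (m, v))" by (metis prod.collapse)
    have "\<Phi> (a, (m, v)) = (w, (1, 0))" using giP[OF embS[OF that]] gv unfolding emb_def by simp
    then have "a = w" "v \<bullet> v = 1" "tcontr_vec d (spiked_tensor lam x enum a) v - m *\<^sub>R v = 0"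
      unfolding \<Phi>_def Phi_def by auto
    then show ?thesis unfolding is_eigenpair_def muf_def uf_def gv by (simp add: norm_eq_1)
  qed
  have dEmb: "(emb has_derivative (\<lambda>h. (h, 0))) (at w)" for w
    unfolding emb_def by (auto intro!: derivative_eq_intros simp: zero_prod_def)
  have dG: "((\<lambda>w. gi (emb w)) has_derivative (\<lambda>h. g' (emb w) (h, 0))) (at w)" if "w \<in> S" for w
    by (rule has_derivative_compose[OF dEmb derg[OF embS[OF that]]])
  have dmuf: "(muf has_derivative (\<lambda>h. fst (snd (g' (emb w) (h, 0))))) (at w)" if "w \<in> S" for w
    unfolding muf_def by (intro has_derivative_fst has_derivative_snd dG that)
  have duf: "(uf has_derivative (\<lambda>h. snd (snd (g' (emb w) (h, 0))))) (at w)" if "w \<in> S" for w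
    unfolding uf_def by (intro has_derivative_snd dG that)
  have fdmu: "frechet_derivative muf (at w) = (\<lambda>h. fst (snd (g' (emb w) (h, 0))))" if "w \<in> S" for w
    using frechet_derivative_at[OF dmuf[OF that]] by simp
  have fduf: "frechet_derivative uf (at w) = (\<lambda>h. snd (snd (g' (emb w) (h, 0))))" if "w \<in> S" for w
    using frechet_derivative_at[OF duf[OF that]] by simp
  have contA: "continuous_on S (\<lambda>w. inv (blinfun_apply (f' (gi (emb w)))) e)" for e
  proof (rule inv_cont)
    have "continuous_on S (\<lambda>w. gi (emb w))"
      by (rule continuous_on_compose2[OF cgi continuous_on_subset[OF cemb]]) (auto simp: embS)
    then show "continuous_on S (\<lambda>w. f' (gi (emb w)))"
      by (rule continuous_on_compose2[OF cf']) auto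
    show "\<And>s. s \<in> S \<Longrightarrow> bij (blinfun_apply (f' (gi (emb s))))" using bijf embS by blast
  qed
  have contD: "continuous_on S (\<lambda>w. g' (emb w) e)" for e
    using contA[of e] by (rule continuous_on_eq) (simp add: g'eq embS)
  have cont: "continuous_on S (\<lambda>w. frechet_derivative muf (at w) (axis k 1))
          \<and> continuous_on S (\<lambda>w. frechet_derivative uf (at w) (axis k 1))" for k
  proof
    show "continuous_on S (\<lambda>w. frechet_derivative muf (at w) (axis k 1))"
      using continuous_on_fst[OF continuous_on_snd[OF contD[of "(axis k 1, 0)"]]]
      by (rule continuous_on_eq) (simp add: fdmu)
    show "continuous_on S (\<lambda>w. frechet_derivative uf (at w) (axis k 1))"
      using continuous_on_snd[OF continuous_on_snd[OF contD[of "(axis k 1, 0)"]]]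
      by (rule continuous_on_eq) (simp add: fduf)
  qed
  have formulas: "let Rbar = matrix_inv (tcontr_mat d (spiked_tensor lam x enum w0) u
                                  - (mu / (real d - 1)) *\<^sub>R mat 1);
              dmu = frechet_derivative muf (at w0) (axis (idx enum i) 1)
          in dmu = 1 / (sigma2 i * sqrt (real CARD('n))) * (\<Prod>j\<leftarrow>i. u $ j)
           \<and> frechet_derivative uf (at w0) (axis (idx enum i) 1)
               = - (1 / ((real d - 1) * sqrt (real CARD('n)))) *\<^sub>R (Rbar *v phi_vec d u i)
                 + (dmu / ((real d - 2) * mu)) *\<^sub>R u" if li: "length i = d" for i
  proof -
    define k where "k = idx enum i"
    define A where "A = M - c *\<^sub>R mat 1"
    define Rbar where "Rbar = matrix_inv A"
    define G where "G = gw enum (axis k 1) u d"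
    define e :: "(real^'m) \<times> real \<times> (real^'n)" where "e = (axis k 1, 0)"
    have y0: "emb w0 \<in> V" using embS w0S by blast
    have bij0: "bij (\<Phi>' z0)" using bijf[OF y0] gi_w0 f'a by simp
    have g'0: "g' (emb w0) = inv (\<Phi>' z0)" using g'eq[OF y0] gi_w0 f'a by simp
    define D where "D = g' (emb w0) e"
    have PD: "\<Phi>' z0 D = e" unfolding D_def g'0 using bij0 by (simp add: bij_is_surj surj_f_inv_f)
    obtain Dw Dm Du where DD: "D = (Dw, (Dm, Du))" by (metis prod.collapse)
    have DD': "g' (emb w0) (axis k 1, 0) = (Dw, (Dm, Du))" using DD unfolding D_def e_def .
    have fm: "frechet_derivative muf (at w0) (axis k 1) = Dm"
      using fdmu[OF w0S] DD' by simp
    have fu: "frechet_derivative uf (at w0) (axis k 1) = Du"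
      using fduf[OF w0S] DD' by simp
    have P: "(Dw, (2*(u \<bullet> Du), real (d-1) *\<^sub>R (M *v Du) + gw enum Dw u d - (mu *\<^sub>R Du + Dm *\<^sub>R u)))
        = (axis k 1, 0)"
      using PD unfolding DD Phi'z0 e_def .
    from P have Dw: "Dw = axis k 1" by simp
    have oD: "u \<bullet> Du = 0" using arg_cong[OF P, of "\<lambda>p. fst (snd p)"] by simp
    have eD0: "real (d-1) *\<^sub>R (M *v Du) + gw enum Dw u d - (mu *\<^sub>R Du + Dm *\<^sub>R u) = 0"
      using arg_cong[OF P, of "\<lambda>p. snd (snd p)"] by (simp only: prod.sel snd_zero)
    have eD: "real (d-1) *\<^sub>R (M *v Du) + G - (mu *\<^sub>R Du + Dm *\<^sub>R u) = 0"
      using eD0 unfolding Dw G_def .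
    have "u \<bullet> (real (d-1) *\<^sub>R (M *v Du) + G - (mu *\<^sub>R Du + Dm *\<^sub>R u)) = 0" using eD by simp
    then have "real (d-1) * (u \<bullet> (M *v Du)) + u \<bullet> G - (mu * (u \<bullet> Du) + Dm * (u \<bullet> u)) = 0"
      by (simp add: inner_add_right inner_diff_right)
    then have DmG: "Dm = u \<bullet> G" using uMv[of Du] oD uu by simp
    have "u \<bullet> G = (\<Sum>a\<in>UNIV. u $ a * Fc (\<lambda>js. axis k 1 $ idx enum js / sqrt (real CARD('n))) u (d-1) [a])"
      unfolding G_def gw_def inner_vec_def by simp
    also have "\<dots> = Fc (\<lambda>js. axis k 1 $ idx enum js / sqrt (real CARD('n))) u (Suc (d-1)) []"
      by (simp add: Fstep[OF sym_E])
    also have "Suc (d-1) = d" using d3 by simp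
    also have "Fc (\<lambda>js. axis k 1 $ idx enum js / sqrt (real CARD('n))) u d []
      = real (card {js. mset js = mset i}) * prod_list (map (($) u) i) / sqrt (real CARD('n))"
      unfolding k_def by (rule G1[OF b li])
    finally have uG: "u \<bullet> G = real (card {js. mset js = mset i}) * prod_list (map (($) u) i) / sqrt (real CARD('n))" .
    have cpos: "card {js. mset js = mset i} > 0"
      using finite_permutations_of_multiset[of "mset i"] unfolding permutations_of_multiset_def
      by (subst card_gt_0_iff) auto
    have dmu_eq: "Dm = 1 / (sigma2 i * sqrt (real CARD('n))) * (\<Prod>j\<leftarrow>i. u $ j)"
      unfolding DmG uG sigma2_def using cpos by simp
    have "\<exists>B. B ** A = mat 1"
      unfolding matrix_left_invertible_ker A_def using Ainj by blast
    then have invA: "invertible A" using invertible_left_inverse by blast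
    have "A ** matrix_inv A = mat 1 \<and> matrix_inv A ** A = mat 1"
      unfolding matrix_inv_def by (rule someI_ex) (use invA in \<open>simp add: invertible_def\<close>)
    then have RA: "Rbar ** A = mat 1" unfolding Rbar_def by blast
    have Rapp: "Rbar *v (A *v v) = v" for v by (simp add: matrix_vector_mul_assoc RA)
    have d1ne: "real (d-1) \<noteq> 0" using d3 by simp
    have mc: "mu - c \<noteq> 0" unfolding c_def using d3 assms(4) by (simp add: field_simps)
    have Au: "A *v u = (mu - c) *\<^sub>R u" unfolding A_def Amul Mu by (simp add: algebra_simps)
    have "u = (mu - c) *\<^sub>R (Rbar *v u)" using Rapp[of u] unfolding Au by (simp add: matrix_vector_mult_scaleR)
    then have "(1/(mu-c)) *\<^sub>R u = (1/(mu-c)) *\<^sub>R ((mu - c) *\<^sub>R (Rbar *v u))" by simp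
    then have Ru: "Rbar *v u = (1/(mu-c)) *\<^sub>R u" using mc by simp
    have Gphi: "G = (1 / sqrt (real CARD('n))) *\<^sub>R phi_vec d u i"
      unfolding G_def gw_def vec_eq_iff k_def using G2[OF b li] d3 by simp
    have r: "real (d-1) *\<^sub>R (M *v Du) = mu *\<^sub>R Du + Dm *\<^sub>R u - G" using eD by (simp add: algebra_simps)
    have "(1/real (d-1)) *\<^sub>R (real (d-1) *\<^sub>R (M *v Du)) = (1/real (d-1)) *\<^sub>R (mu *\<^sub>R Du + Dm *\<^sub>R u - G)"
      by (simp only: r)
    then have MD: "M *v Du = (1/real (d-1)) *\<^sub>R (mu *\<^sub>R Du + Dm *\<^sub>R u - G)" using d1ne by simp
    have AD: "A *v Du = (Dm/real (d-1)) *\<^sub>R u - (1/real (d-1)) *\<^sub>R G"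
    proof -
      have "A *v Du = M *v Du - c *\<^sub>R Du" unfolding A_def by (rule Amul)
      also have "\<dots> = (Dm/real (d-1)) *\<^sub>R u - (1/real (d-1)) *\<^sub>R G"
        unfolding MD c_def d1[symmetric] by (simp add: algebra_simps)
      finally show ?thesis .
    qed
    have "Du = Rbar *v (A *v Du)" by (rule Rapp[symmetric])
    also have "\<dots> = (Dm/real (d-1)) *\<^sub>R (Rbar *v u) - (1/real (d-1)) *\<^sub>R (Rbar *v G)"
      unfolding AD by (simp add: matrix_vector_mult_diff_distrib matrix_vector_mult_scaleR)
    also have "\<dots> = (Dm/real (d-1) / (mu - c)) *\<^sub>R u - (1/((real d - 1) * sqrt (real CARD('n)))) *\<^sub>R (Rbar *v phi_vec d u i)"
      unfolding Ru Gphi d1 by (simp add: matrix_vector_mult_scaleR)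
    also have "Dm/real (d-1) / (mu - c) = Dm / ((real d - 2) * mu)"
    proof -
      have t: "real d - 1 \<noteq> 0" using d3 by simp
      have m: "mu - mu / (real d - 1) = mu * (real d - 2) / (real d - 1)" using t by (simp add: field_simps)
      have "Dm / (real d - 1) / (mu * (real d - 2) / (real d - 1)) = Dm / ((real d - 1) * (mu * (real d - 2) / (real d - 1)))"
        by (simp only: divide_divide_eq_left)
      also have "(real d - 1) * (mu * (real d - 2) / (real d - 1)) = (real d - 2) * mu" using t by simp
      finally show ?thesis unfolding c_def d1 m .
    qed
    finally have du_eq: "Du = - (1/((real d - 1) * sqrt (real CARD('n)))) *\<^sub>R (Rbar *v phi_vec d u i) + (Dm / ((real d - 2) * mu)) *\<^sub>R u"
      by simp
    show ?thesis
      unfolding Let_def fm fu k_def[symmetric]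
      using dmu_eq du_eq unfolding Rbar_def A_def M_def Y0_def c_def by simp
  qed
  show ?thesis
    apply (rule exI[of _ S], rule exI[of _ muf], rule exI[of _ uf])
    using oS w0S muf0 uf0 eigS dmuf duf cont formulas by (auto simp: differentiable_def)
qed

end
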